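(* Let $n\ge1$ and $1\le k\le n$. For every $g\in\mathrm{Sp}(2n,\mathbb R)$ one has $p_k(g^{-1})=(-1)^k p_k(g)$.
   Context: $J:\mathbb R^{2n}\to\mathbb R^{2n}$ is the linear map with $Je_i=(-1)^ie_{2n-i+1}$ on the standard basis $e_1,\dots,e_{2n}$, and $\mathrm{Sp}(2n,\mathbb R)=\{g\in\mathrm{GL}(2n,\mathbb R):g^TJg=J\}$. The antiprincipal $k\times k$ minor $p_k(g)$ of a $2n\times 2n$ matrix $g$ is defined by $ge_{2n}\wedge ge_{2n-1}\wedge\cdots\wedge ge_{2n-k+1}\wedge e_{k+1}\wedge\cdots\wedge e_{2n}=p_k(g)\,e_1\wedge\cdots\wedge e_{2n}$; equivalently $p_k(g)=\det\big(g[\{1,\dots,k\},\{2n,2n-1,\dots,2n-k+1\}]\big)$, the determinant of the submatrix with rows $1,\dots,k$ and columns $2n,\dots,2n-k+1$ in that order. *)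

theory Defs
  imports "Jordan_Normal_Form.Determinant"
begin

text \<open>Matrices are 0-indexed: basis vector e_i (1-indexed) is index i-1.
  J e_i = (-1)^i e_{2n-i+1}, so column c (0-indexed) of J has entry (-1)^(c+1)
  in row 2n-1-c.\<close>
definition Jmat :: "nat \<Rightarrow> real mat" where
  "Jmat n = mat (2*n) (2*n) (\<lambda>(r,c). if r + c = 2*n - 1 then (-1)^(c+1) else 0)"

definition Sp :: "nat \<Rightarrow> real mat set" where
  "Sp n = {g. g \<in> carrier_mat (2*n) (2*n) \<and> invertible_mat g \<and>
              transpose_mat g * Jmat n * g = Jmat n}"

text \<open>Antiprincipal k x k minor: rows 1..k, columns 2n, 2n-1, ..., 2n-k+1 (in that order);
  0-indexed rows 0..k-1 and columns 2n-1-j for j = 0..k-1.\<close>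
definition antiminor :: "nat \<Rightarrow> nat \<Rightarrow> real mat \<Rightarrow> real" where
  "antiminor n k g = det (mat k k (\<lambda>(i,j). g $$ (i, 2*n - 1 - j)))"

end

theory Submission
  imports Defs
begin

lemma J_carrier: "Jmat n \<in> carrier_mat (2*n) (2*n)"
  by (simp add: Jmat_def)

lemma J_mult_entry:
  assumes A: "A \<in> carrier_mat (2*n) m" and r: "r < 2*n" and c: "c < m"
  shows "(Jmat n * A) $$ (r,c) = (-1)^(2*n-r) * A $$ (2*n-1-r, c)"
proof -
  have "(Jmat n * A) $$ (r,c) = (\<Sum>l\<in>{0..<2*n}. Jmat n $$ (r,l) * A $$ (l,c))"
    using A r c by (simp add: Jmat_def scalar_prod_def)
  also have "\<dots> = (\<Sum>l\<in>{0..<2*n}. if l = 2*n-1-r then (-1)^(2*n-r) * A $$ (l,c) else 0)"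
    using r by (intro sum.cong refl) (auto simp: Jmat_def Suc_diff_Suc)
  also have "\<dots> = (-1)^(2*n-r) * A $$ (2*n-1-r, c)"
    using r by (simp add: sum.delta)
  finally show ?thesis .
qed

lemma mult_J_entry:
  assumes A: "A \<in> carrier_mat m (2*n)" and r: "r < m" and c: "c < 2*n"
  shows "(A * Jmat n) $$ (r,c) = A $$ (r, 2*n-1-c) * (-1)^(c+1)"
proof -
  have "(A * Jmat n) $$ (r,c) = (\<Sum>l\<in>{0..<2*n}. A $$ (r,l) * Jmat n $$ (l,c))"
    using A r c by (simp add: Jmat_def scalar_prod_def)
  also have "\<dots> = (\<Sum>l\<in>{0..<2*n}. if l = 2*n-1-c then A $$ (r,l) * (-1)^(c+1) else 0)"
    using c by (intro sum.cong refl) (auto simp: Jmat_def)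
  also have "\<dots> = A $$ (r, 2*n-1-c) * (-1)^(c+1)"
    using c by (simp add: sum.delta)
  finally show ?thesis .
qed

lemma h_entry:
  fixes g h :: "real mat"
  assumes g: "g \<in> Sp n" and h: "h \<in> carrier_mat (2*n) (2*n)" and hg: "h * g = 1\<^sub>m (2*n)"
    and r: "r < 2*n" and c: "c < 2*n"
  shows "h $$ (r,c) = (-1)^(r+c) * g $$ (2*n-1-c, 2*n-1-r)"
proof -
  have gc: "g \<in> carrier_mat (2*n) (2*n)" and eq: "transpose_mat g * Jmat n * g = Jmat n"
    using g by (auto simp: Sp_def)
  have gh: "g * h = 1\<^sub>m (2*n)" using mat_mult_left_right_inverse[OF h gc hg] .
  have "transpose_mat g * Jmat n = transpose_mat g * Jmat n * (g * h)"
    using gc J_carrier by (metis gh right_mult_one_mat mult_carrier_mat transpose_carrier_mat)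
  also have "\<dots> = (transpose_mat g * Jmat n * g) * h"
    by (rule assoc_mult_mat[symmetric, of _ "2*n" "2*n" _ "2*n" _ "2*n"]) (use gc h J_carrier in auto)
  also have "\<dots> = Jmat n * h" using eq by simp
  finally have E: "transpose_mat g * Jmat n = Jmat n * h" .
  let ?r = "2*n-1-r"
  have r': "?r < 2*n" using r by simp
  have "(Jmat n * h) $$ (?r, c) = (-1)^(2*n-?r) * h $$ (r, c)"
    using J_mult_entry[OF h r' c] r by simp
  moreover have "(transpose_mat g * Jmat n) $$ (?r, c) = g $$ (2*n-1-c, ?r) * (-1)^(c+1)"
    using mult_J_entry[of "transpose_mat g" "2*n" n ?r c] gc r' c by simp
  ultimately have X: "(-1)^(r+1) * h $$ (r, c) = g $$ (2*n-1-c, ?r) * (-1)^(c+1)"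
    using E r by (simp add: Suc_diff_Suc)
  have "h $$ (r,c) = (-1)^(r+1) * ((-1)^(r+1) * h $$ (r, c))"
    by (simp add: power_mult_distrib[symmetric] flip: power_add) 
  also have "\<dots> = (-1)^(r+c) * g $$ (2*n-1-c, ?r)"
    unfolding X by (simp add: power_add)
  finally show ?thesis .
qed

definition Dm :: "nat \<Rightarrow> real mat" where
  "Dm k = mat k k (\<lambda>(i,j). if i = j then (-1)^i else 0)"

lemma D_entry:
  assumes A: "A \<in> carrier_mat k k" and i: "i < k" and j: "j < k"
  shows "(Dm k * A * Dm k) $$ (i,j) = (-1)^i * A $$ (i,j) * (-1)^j"
proof -
  have "(Dm k * A) $$ (i,l) = (-1)^i * A $$ (i,l)" if l: "l < k" for l
  proof -
    have "(Dm k * A) $$ (i,l) = (\<Sum>m\<in>{0..<k}. Dm k $$ (i,m) * A $$ (m,l))"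
      using A i l by (simp add: Dm_def scalar_prod_def)
    also have "\<dots> = (\<Sum>m\<in>{0..<k}. if m = i then (-1)^i * A $$ (m,l) else 0)"
      using i by (intro sum.cong refl) (auto simp: Dm_def)
    finally show ?thesis using i by (simp add: sum.delta)
  qed
  then have "(Dm k * A * Dm k) $$ (i,j) = (\<Sum>m\<in>{0..<k}. (-1)^i * A $$ (i,m) * Dm k $$ (m,j))"
    using A i j by (simp add: Dm_def scalar_prod_def)
  also have "\<dots> = (\<Sum>m\<in>{0..<k}. if m = j then (-1)^i * A $$ (i,m) * (-1)^j else 0)"
    using j by (intro sum.cong refl) (auto simp: Dm_def)
  finally show ?thesis using j by (simp add: sum.delta)
qed

lemma D_carrier: "Dm k \<in> carrier_mat k k" by (simp add: Dm_def)

lemma DD: "Dm k * Dm k = 1\<^sub>m k"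
proof -
  have "Dm k * 1\<^sub>m k * Dm k = 1\<^sub>m k"
  proof (rule eq_matI)
    fix i j assume "i < dim_row (1\<^sub>m k)" "j < dim_col (1\<^sub>m k)"
    then have "i < k" "j < k" by auto
    then show "(Dm k * 1\<^sub>m k * Dm k) $$ (i,j) = 1\<^sub>m k $$ (i,j)"
      by (auto simp: D_entry[of "1\<^sub>m k"] power_add[symmetric])
  qed (auto simp: Dm_def)
  then show ?thesis by (metis D_carrier right_mult_one_mat)
qed

lemma det_D_sq: "det (Dm k) * det (Dm k) = 1"
  using det_mult[OF D_carrier D_carrier, of k] DD by simp

lemma sign_aux:
  assumes "j < n"
  shows "((-1::real)^(i + (2*n-1-j))) = - ((-1)^i * (-1)^j)"
proof -
  have "2*n-1-j = 2*(n-1-j) + (j+1)" using assms by simp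
  then show ?thesis by (simp add: power_add power_mult)
qed

theorem mainTheorem9:
  fixes n k :: nat and g h :: "real mat"
  assumes "1 \<le> n" and "1 \<le> k" and "k \<le> n"
    and "g \<in> Sp n"
    and "h \<in> carrier_mat (2*n) (2*n)" and "h * g = 1\<^sub>m (2*n)"
  shows "antiminor n k h = (-1)^k * antiminor n k g"
proof -
  define Mg where "Mg = mat k k (\<lambda>(i,j). g $$ (i, 2*n - 1 - j))"
  define Mh where "Mh = mat k k (\<lambda>(i,j). h $$ (i, 2*n - 1 - j))"
  have Mgc: "transpose_mat Mg \<in> carrier_mat k k" by (simp add: Mg_def)
  have eq: "Mh = (-1) \<cdot>\<^sub>m (Dm k * transpose_mat Mg * Dm k)"
  proof (rule eq_matI)
    fix i j assume "i < dim_row ((-1) \<cdot>\<^sub>m (Dm k * transpose_mat Mg * Dm k))"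
      "j < dim_col ((-1) \<cdot>\<^sub>m (Dm k * transpose_mat Mg * Dm k))"
    then have i: "i < k" and j: "j < k" by (auto simp: Dm_def)
    have jn: "j < n" "i < n" using j i assms by auto
    have "Mh $$ (i,j) = h $$ (i, 2*n-1-j)" using i j by (simp add: Mh_def)
    also have "\<dots> = (-1)^(i + (2*n-1-j)) * g $$ (2*n-1-(2*n-1-j), 2*n-1-i)"
      using h_entry[OF assms(4,5,6)] jn by simp
    also have "\<dots> = - ((-1)^i * (-1)^j) * g $$ (j, 2*n-1-i)"
      using jn by (subst sign_aux[OF jn(1)]) simp
    also have "\<dots> = ((-1) \<cdot>\<^sub>m (Dm k * transpose_mat Mg * Dm k)) $$ (i,j)"
      using i j D_entry[OF Mgc i j] by (simp add: Mg_def Dm_def)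
    finally show "Mh $$ (i,j) = ((-1) \<cdot>\<^sub>m (Dm k * transpose_mat Mg * Dm k)) $$ (i,j)" .
  qed (auto simp: Mh_def Dm_def)
  have "det Mh = (-1)^k * (det (Dm k) * det (transpose_mat Mg) * det (Dm k))"
  proof -
    have c1: "Dm k * transpose_mat Mg \<in> carrier_mat k k" by (rule mult_carrier_mat[OF D_carrier Mgc])
    have "det (Dm k * transpose_mat Mg * Dm k) = det (Dm k) * det (transpose_mat Mg) * det (Dm k)"
      using det_mult[OF c1 D_carrier] det_mult[OF D_carrier Mgc] by simp
    moreover have "dim_col (Dm k * transpose_mat Mg * Dm k) = k" by (simp add: Dm_def)
    ultimately show ?thesis unfolding eq by simp
  qed
  also have "\<dots> = (-1)^k * (det (Dm k) * det (Dm k)) * det Mg"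
    using det_transpose[of Mg k] by (simp add: Mg_def)
  also have "\<dots> = (-1)^k * det Mg" by (simp add: det_D_sq)
  finally show ?thesis unfolding antiminor_def Mg_def Mh_def .
qed

end
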